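(* For every network $\mathcal N$, the rate region $\mathcal R^{\mathcal N}$ is a convex set.
   Context: A network is a triple $\mathcal N=(\mathcal L,\mathcal I,D_{\mathcal L})$ where $\mathcal L$ is a finite nonempty set (of links); $\mathcal I=(\mathcal I(l))_{l\in\mathcal L}$ is the collision profile, each $\mathcal I(l)$ being a collection of nonempty subsets of $\mathcal L$; and $D_{\mathcal L}$ assigns an integer $D_{\mathcal L}(l,l')$ to every pair $(l,l')$ with $l'\in\phi$ for some $\phi\in\mathcal I(l)$. A schedule is a map $S:\mathcal L\times\mathbb Z\to\{0,1\}$. $S(l,t)$ has a collision if there exists $\phi\in\mathcal I(l)$ such that $S(l',t+D_{\mathcal L}(l,l'))=1$ for every $l'\in\phi$; otherwise it is collision free. For a schedule $S$ and link $l$, $R_S(l)=\lim_{T\to\infty}\frac1T\sum_{t=0}^{T-1}\iota\big(S(l,t)=1\text{ and }S(l,t)\text{ is collision free}\big)$ when the limit exists; if it exists for all $l$, $R_S=(R_S(l))_{l}$ is the rate vector of $S$. Comparisons $\succcurlyeq$ are entrywise and $R-\epsilon$ subtracts $\epsilon$ from each entry. A nonnegative vector $R\in[0,\infty)^{\mathcal L}$ is achievable if for every $\epsilon>0$ there is a schedule $S$ whose rate vector exists and satisfies $R_S\succcurlyeq R-\epsilon$; the rate region $\mathcal R^{\mathcal N}$ is the set of all achievable nonnegative vectors. *)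

theory Defs
  imports "HOL-Analysis.Analysis"
begin

(* Links: a finite (nonempty, automatically) type 'l, i.e. the link set L = UNIV.
   Collision profile  I :: 'l => 'l set set,  delay map  D :: 'l => 'l => int
   (only its values D l l' for l' in some phi in I l matter).
   Schedules: S :: 'l => int => bool  (S l t = True  means  S(l,t) = 1). *)

definition network :: "('l::finite \<Rightarrow> 'l set set) \<Rightarrow> bool" where
  "network I \<longleftrightarrow> (\<forall>l. \<forall>\<phi>\<in>I l. \<phi> \<noteq> {})"

definition collision ::
  "('l \<Rightarrow> 'l set set) \<Rightarrow> ('l \<Rightarrow> 'l \<Rightarrow> int) \<Rightarrow> ('l \<Rightarrow> int \<Rightarrow> bool) \<Rightarrow> 'l \<Rightarrow> int \<Rightarrow> bool" where
  "collision I D S l t \<longleftrightarrow> (\<exists>\<phi>\<in>I l. \<forall>l'\<in>\<phi>. S l' (t + D l l'))"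

definition avg_success ::
  "('l \<Rightarrow> 'l set set) \<Rightarrow> ('l \<Rightarrow> 'l \<Rightarrow> int) \<Rightarrow> ('l \<Rightarrow> int \<Rightarrow> bool) \<Rightarrow> 'l \<Rightarrow> nat \<Rightarrow> real" where
  "avg_success I D S l T =
     (1 / real T) * real (card {t::nat. t < T \<and> S l (int t) \<and> \<not> collision I D S l (int t)})"

definition rate_exists ::
  "('l \<Rightarrow> 'l set set) \<Rightarrow> ('l \<Rightarrow> 'l \<Rightarrow> int) \<Rightarrow> ('l \<Rightarrow> int \<Rightarrow> bool) \<Rightarrow> bool" where
  "rate_exists I D S \<longleftrightarrow> (\<forall>l. convergent (avg_success I D S l))"

(* the rate vector R_S (meaningful when rate_exists holds) *)
definition rate_vector ::
  "('l::finite \<Rightarrow> 'l set set) \<Rightarrow> ('l \<Rightarrow> 'l \<Rightarrow> int) \<Rightarrow> ('l \<Rightarrow> int \<Rightarrow> bool) \<Rightarrow> real ^ 'l" where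
  "rate_vector I D S = (\<chi> l. lim (avg_success I D S l))"

definition achievable ::
  "('l::finite \<Rightarrow> 'l set set) \<Rightarrow> ('l \<Rightarrow> 'l \<Rightarrow> int) \<Rightarrow> real ^ 'l \<Rightarrow> bool" where
  "achievable I D R \<longleftrightarrow> (\<forall>l. R $ l \<ge> 0) \<and>
     (\<forall>\<epsilon>>0. \<exists>S. rate_exists I D S \<and> (\<forall>l. rate_vector I D S $ l \<ge> R $ l - \<epsilon>))"

definition rate_region ::
  "('l::finite \<Rightarrow> 'l set set) \<Rightarrow> ('l \<Rightarrow> 'l \<Rightarrow> int) \<Rightarrow> (real ^ 'l) set" where
  "rate_region I D = {R. achievable I D R}"

end

theory Submission
  imports Defs
begin


lemma card_split:
  "card {t. t < P + T \<and> h t} = card {t. t < P \<and> h t} + card {t::nat. t < T \<and> h (t + P)}"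
proof -
  have e: "{t. t < P + T \<and> h t} = {t. t < P \<and> h t} \<union> (\<lambda>t. t + P) ` {t::nat. t < T \<and> h (t + P)}"
    apply (auto simp: image_iff)
    by (metis add.commute less_diff_conv2 not_less le_add_diff_inverse2)
  have "card ({t. t < P \<and> h t} \<union> (\<lambda>t. t + P) ` {t::nat. t < T \<and> h (t + P)})
     = card {t. t < P \<and> h t} + card ((\<lambda>t. t + P) ` {t::nat. t < T \<and> h (t + P)})"
    by (rule card_Un_disjoint) auto
  also have "card ((\<lambda>t. t + P) ` {t::nat. t < T \<and> h (t + P)}) = card {t::nat. t < T \<and> h (t + P)}"
    by (rule card_image) (auto simp: inj_on_def)
  finally show ?thesis using e by simp
qed

lemma card_periodic:
  assumes "\<forall>t. h (t + P) = h t"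
  shows "card {t. t < q * P + r \<and> h t} = q * card {t::nat. t < P \<and> h t} + card {t. t < r \<and> h t}"
proof (induction q)
  case 0 then show ?case by simp
next
  case (Suc q)
  have "card {t. t < Suc q * P + r \<and> h t} = card {t. t < P + (q * P + r) \<and> h t}"
    by (simp add: add.assoc)
  also have "\<dots> = card {t. t < P \<and> h t} + card {t::nat. t < q*P+r \<and> h (t + P)}"
    by (rule card_split)
  also have "{t::nat. t < q*P+r \<and> h (t + P)} = {t::nat. t < q*P+r \<and> h t}" using assms by simp
  finally show ?case using Suc by simp
qed

lemma card_lt_le: "card {t::nat. t < r \<and> h t} \<le> r"
proof -
  have "card {t::nat. t < r \<and> h t} \<le> card {..<r}" by (rule card_mono) auto
  then show ?thesis by simp
qed

lemma periodic_avg_lim: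
  assumes P: "P > 0" and per: "\<forall>t. h (t + P) = h t"
  shows "(\<lambda>T. 1 / real T * real (card {t::nat. t < T \<and> h t})) \<longlonglongrightarrow> real (card {t. t < P \<and> h t}) / real P"
proof -
  define c where "c = card {t. t < P \<and> h t}"
  define f where "f = (\<lambda>T. 1 / real T * real (card {t::nat. t < T \<and> h t}))"
  have bound: "norm (f T - real c / real P) \<le> real P / real T" if T: "T > 0" for T
  proof -
    define q where "q = T div P"
    define r where "r = T mod P"
    have Tq: "T = q * P + r" by (simp add: q_def r_def)
    define Cr where "Cr = card {t. t < r \<and> h t}"
    have CT: "card {t::nat. t < T \<and> h t} = q * c + Cr"
      unfolding Tq c_def Cr_def using card_periodic[OF per] by simp
    have Crr: "Cr \<le> r" unfolding Cr_def by (rule card_lt_le)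
    have rP: "r < P" using P by (simp add: r_def)
    have cP: "c \<le> P" unfolding c_def by (rule card_lt_le)
    have eq: "f T - real c / real P = (real P * Cr - real c * r) / (real T * real P)"
    proof -
      have TR: "real T = real q * real P + real r" using Tq by simp
      have "f T = (real q * real c + real Cr) / real T" unfolding f_def CT by simp
      moreover have X: "real T > 0" using T by simp
      moreover have "real P * Cr - real c * r = real P * (real q * real c + real Cr) - real c * real T"
        unfolding TR by (simp add: algebra_simps)
      ultimately show ?thesis using P by (simp add: diff_divide_distrib)
    qed
    have a1: "real P * Cr \<le> real P * real P" using Crr rP by (simp add: mult_left_mono)
    have a2: "real c * r \<le> real P * real P" using cP rP by (simp add: mult_mono)
    have "\<bar>real P * Cr - real c * r\<bar> \<le> real P * real P" using a1 a2
      by (smt (verit) mult_nonneg_nonneg of_nat_0_le_iff)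
    then have "\<bar>real P * Cr - real c * r\<bar> / (real T * real P) \<le> real P * real P / (real T * real P)"
      by (rule divide_right_mono) simp_all
    also have "\<dots> = real P / real T" using P by simp
    finally show ?thesis by (simp add: eq abs_divide)
  qed
  have "(\<lambda>T. f T - real c / real P) \<longlonglongrightarrow> 0"
    apply (rule Lim_null_comparison[where g = "\<lambda>T. real P / real T"])
    using bound apply (auto simp: eventually_sequentially intro!: exI[of _ 1])[1]
    by (rule lim_const_over_n)
  then show ?thesis unfolding f_def c_def by (rule LIM_zero_cancel)
qed



definition tshare :: "('l \<Rightarrow> int \<Rightarrow> bool) \<Rightarrow> ('l \<Rightarrow> int \<Rightarrow> bool) \<Rightarrow> int \<Rightarrow> int \<Rightarrow> int \<Rightarrow> 'l \<Rightarrow> int \<Rightarrow> bool" where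
  "tshare S1 S2 a b g l t =
    ((0 \<le> t mod (a+b+2*g) \<and> t mod (a+b+2*g) < a \<and> S1 l (t mod (a+b+2*g))) \<or>
     (a + g \<le> t mod (a+b+2*g) \<and> t mod (a+b+2*g) < a+g+b \<and> S2 l (t mod (a+b+2*g) - (a+g))))"

lemma mod_shift:
  fixes x P :: int
  assumes "0 < P" "-P \<le> x" "x < P"
  shows "x mod P = (if x < 0 then x + P else x)"
proof (cases "x < 0")
  case True
  have "x mod P = (x + P) mod P" by simp
  also have "\<dots> = x + P" using True assms by (intro mod_pos_pos_trivial) auto
  finally show ?thesis using True by simp
next
  case False then show ?thesis using assms by (simp add: mod_pos_pos_trivial)
qed

lemma block1:
  assumes "0 \<le> a" "0 \<le> b" "0 \<le> g" "0 < a+b+2*g" "\<forall>l l'. \<bar>D l l'\<bar> \<le> g"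
    "0 \<le> s" "s < a" "t mod (a+b+2*g) = s" "S1 l s" "\<not> collision I D S1 l s"
  shows "tshare S1 S2 a b g l t \<and> \<not> collision I D (tshare S1 S2 a b g) l t"
proof
  show "tshare S1 S2 a b g l t" using assms by (simp add: tshare_def)
  show "\<not> collision I D (tshare S1 S2 a b g) l t"
  proof
    assume "collision I D (tshare S1 S2 a b g) l t"
    then obtain \<phi> where \<phi>: "\<phi> \<in> I l" "\<forall>l'\<in>\<phi>. tshare S1 S2 a b g l' (t + D l l')"
      unfolding collision_def by blast
    have "\<forall>l'\<in>\<phi>. S1 l' (s + D l l')"
    proof
      fix l' assume "l' \<in> \<phi>"
      then have sc: "tshare S1 S2 a b g l' (t + D l l')" using \<phi> by blast
      define P where "P = a+b+2*g"
      define d where "d = D l l'"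
      have dg: "\<bar>d\<bar> \<le> g" using assms(5) d_def by blast
      have "(t + d) mod P = (s + d) mod P"
        using assms(8) unfolding P_def by (metis mod_add_left_eq)
      also have "\<dots> = (if s + d < 0 then s + d + P else s + d)"
        by (rule mod_shift) (use assms dg in \<open>auto simp: P_def\<close>)
      finally have m: "(t + d) mod P = (if s + d < 0 then s + d + P else s + d)" .
      show "S1 l' (s + D l l')"
        using sc m dg assms(1-7) unfolding tshare_def P_def[symmetric] d_def[symmetric]
        by (auto simp: P_def split: if_splits)
    qed
    then show False using assms(10) \<phi>(1) unfolding collision_def by blast
  qed
qed

lemma block2:
  assumes "0 \<le> a" "0 \<le> b" "0 \<le> g" "0 < a+b+2*g" "\<forall>l l'. \<bar>D l l'\<bar> \<le> g"
    "0 \<le> s" "s < b" "t mod (a+b+2*g) = a + g + s" "S2 l s" "\<not> collision I D S2 l s"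
  shows "tshare S1 S2 a b g l t \<and> \<not> collision I D (tshare S1 S2 a b g) l t"
proof
  show "tshare S1 S2 a b g l t" using assms by (simp add: tshare_def)
  show "\<not> collision I D (tshare S1 S2 a b g) l t"
  proof
    assume "collision I D (tshare S1 S2 a b g) l t"
    then obtain \<phi> where \<phi>: "\<phi> \<in> I l" "\<forall>l'\<in>\<phi>. tshare S1 S2 a b g l' (t + D l l')"
      unfolding collision_def by blast
    have "\<forall>l'\<in>\<phi>. S2 l' (s + D l l')"
    proof
      fix l' assume "l' \<in> \<phi>"
      then have sc: "tshare S1 S2 a b g l' (t + D l l')" using \<phi> by blast
      define P where "P = a+b+2*g"
      define d where "d = D l l'"
      have dg: "\<bar>d\<bar> \<le> g" using assms(5) d_def by blast
      have "(t + d) mod P = (a + g + s + d) mod P"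
        using assms(8) unfolding P_def by (metis mod_add_left_eq)
      also have "\<dots> = a + g + s + d"
        by (rule mod_pos_pos_trivial) (use assms dg in \<open>auto simp: P_def\<close>)
      finally have m: "(t + d) mod P = a + g + s + d" .
      show "S2 l' (s + D l l')"
        using sc m dg assms(1-7) unfolding tshare_def P_def[symmetric] d_def[symmetric]
        by (auto simp: P_def add.assoc)
    qed
    then show False using assms(10) \<phi>(1) unfolding collision_def by blast
  qed
qed

lemma tshare_periodic:
  "tshare S1 S2 a b g l (t + (a+b+2*g)) = tshare S1 S2 a b g l t"
  by (simp add: tshare_def)

lemma succ_periodic:
  "(tshare S1 S2 a b g l (t + (a+b+2*g)) \<and> \<not> collision I D (tshare S1 S2 a b g) l (t + (a+b+2*g)))
   = (tshare S1 S2 a b g l t \<and> \<not> collision I D (tshare S1 S2 a b g) l t)"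
proof -
  have e: "\<And>x. t + (a+b+2*g) + x = (t + x) + (a+b+2*g)" by simp
  show ?thesis unfolding collision_def e by (simp only: tshare_periodic)
qed



definition cnt :: "('l \<Rightarrow> 'l set set) \<Rightarrow> ('l \<Rightarrow> 'l \<Rightarrow> int) \<Rightarrow> ('l \<Rightarrow> int \<Rightarrow> bool) \<Rightarrow> 'l \<Rightarrow> nat \<Rightarrow> nat" where
  "cnt I D S l T = card {t::nat. t < T \<and> S l (int t) \<and> \<not> collision I D S l (int t)}"

lemma count_period:
  assumes P: "0 < A + B + 2*G" and Dg: "\<forall>l l'. \<bar>D l l'\<bar> \<le> int G"
  shows "cnt I D S1 l A + cnt I D S2 l B \<le> cnt I D (tshare S1 S2 (int A) (int B) (int G)) l (A + B + 2*G)"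
proof -
  let ?Sc = "tshare S1 S2 (int A) (int B) (int G)"
  define X where "X = {t::nat. t < A + B + 2*G \<and> ?Sc l (int t) \<and> \<not> collision I D ?Sc l (int t)}"
  define Y1 where "Y1 = {t::nat. t < A \<and> S1 l (int t) \<and> \<not> collision I D S1 l (int t)}"
  define Y2 where "Y2 = {t::nat. t < B \<and> S2 l (int t) \<and> \<not> collision I D S2 l (int t)}"
  have Pi: "0 < int A + int B + 2 * int G" using P by linarith
  have s1: "Y1 \<subseteq> X"
  proof
    fix t assume "t \<in> Y1"
    then have t: "t < A" "S1 l (int t)" "\<not> collision I D S1 l (int t)" unfolding Y1_def by auto
    have m: "int t mod (int A + int B + 2 * int G) = int t"
      using t(1) by (intro mod_pos_pos_trivial) auto
    have "?Sc l (int t) \<and> \<not> collision I D ?Sc l (int t)"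
      by (rule block1[OF _ _ _ Pi Dg _ _ m t(2,3)]) (use t(1) in auto)
    then show "t \<in> X" using t(1) unfolding X_def by auto
  qed
  have s2: "(\<lambda>t. A + G + t) ` Y2 \<subseteq> X"
  proof
    fix t' assume "t' \<in> (\<lambda>t. A + G + t) ` Y2"
    then obtain t where tt: "t' = A + G + t" and t: "t < B" "S2 l (int t)" "\<not> collision I D S2 l (int t)"
      unfolding Y2_def by auto
    have m: "int t' mod (int A + int B + 2 * int G) = int A + int G + int t"
      unfolding tt of_nat_add by (rule mod_pos_pos_trivial) (use t(1) in auto)
    have "?Sc l (int t') \<and> \<not> collision I D ?Sc l (int t')"
      by (rule block2[OF _ _ _ Pi Dg _ _ m t(2,3)]) (use t(1) in auto)
    then show "t' \<in> X" using t(1) tt unfolding X_def by auto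
  qed
  have fin: "finite X" unfolding X_def by auto
  have "card Y1 + card Y2 = card Y1 + card ((\<lambda>t. A + G + t) ` Y2)"
    by (simp add: card_image)
  also have "\<dots> = card (Y1 \<union> (\<lambda>t. A + G + t) ` Y2)"
    by (rule card_Un_disjoint[symmetric]) (auto simp: Y1_def Y2_def)
  also have "\<dots> \<le> card X" by (rule card_mono[OF fin]) (use s1 s2 in auto)
  finally show ?thesis unfolding cnt_def X_def Y1_def Y2_def .
qed

lemma avg_cnt: "avg_success I D S l T = real (cnt I D S l T) / real T"
  by (simp add: avg_success_def cnt_def)

lemma tshare_rate:
  assumes P: "0 < N" "N = A + B + 2*G"
  shows "avg_success I D (tshare S1 S2 (int A) (int B) (int G)) l \<longlonglongrightarrow>
           real (cnt I D (tshare S1 S2 (int A) (int B) (int G)) l N) / real N"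
proof -
  let ?Sc = "tshare S1 S2 (int A) (int B) (int G)"
  define h where "h = (\<lambda>t::nat. ?Sc l (int t) \<and> \<not> collision I D ?Sc l (int t))"
  have per: "\<forall>t. h (t + N) = h t"
  proof
    fix t
    have "int (t + N) = int t + (int A + int B + 2 * int G)" using P by simp
    then show "h (t + N) = h t" unfolding h_def using succ_periodic[of S1 S2 "int A" "int B" "int G" l "int t" I D]
      by simp
  qed
  have "avg_success I D ?Sc l = (\<lambda>T. 1 / real T * real (card {t::nat. t < T \<and> h t}))"
    by (simp add: avg_success_def h_def fun_eq_iff)
  moreover have "cnt I D ?Sc l N = card {t::nat. t < N \<and> h t}" by (simp add: cnt_def h_def)
  ultimately show ?thesis using periodic_avg_lim[OF P(1) per] by simp
qed

lemma cnt_lower: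
  assumes "rate_exists I D S" "\<forall>l. rate_vector I D S $ l \<ge> R $ l - \<delta>" "\<delta> > 0"
  shows "\<exists>K\<ge>0. \<forall>l A. real (cnt I D S l A) \<ge> real A * max (R$l - 2*\<delta>) 0 - K"
proof -
  have "\<forall>l. \<exists>K\<ge>0. \<forall>A. real (cnt I D S l A) \<ge> real A * max (R$l - 2*\<delta>) 0 - K"
  proof
    fix l
    have conv: "avg_success I D S l \<longlonglongrightarrow> lim (avg_success I D S l)"
      using assms(1) unfolding rate_exists_def by (simp add: convergent_LIMSEQ_iff)
    have rl: "lim (avg_success I D S l) \<ge> R $ l - \<delta>" using assms(2) by (simp add: rate_vector_def)
    have "eventually (\<lambda>A. lim (avg_success I D S l) - \<delta> < avg_success I D S l A) sequentially"
      by (rule order_tendstoD(1)[OF conv]) (use assms(3) in simp)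
    then obtain N0 where N0: "\<And>A. A \<ge> N0 \<Longrightarrow> lim (avg_success I D S l) - \<delta> < avg_success I D S l A"
      unfolding eventually_sequentially by blast
    define c where "c = max (R$l - 2*\<delta>) 0"
    have c0: "c \<ge> 0" by (simp add: c_def)
    show "\<exists>K\<ge>0. \<forall>A. real (cnt I D S l A) \<ge> real A * max (R$l - 2*\<delta>) 0 - K"
    proof (intro exI[of _ "real N0 * c"] conjI allI)
      show "0 \<le> real N0 * c" using c0 by simp
      fix A
      show "real A * max (R$l - 2*\<delta>) 0 - real N0 * c \<le> real (cnt I D S l A)"
      proof (cases "A \<ge> N0 \<and> A > 0")
        case True
        then have "R $ l - 2*\<delta> < real (cnt I D S l A) / real A"
          using N0[of A] rl by (simp add: avg_cnt)
        then have "(R $ l - 2*\<delta>) * real A \<le> real (cnt I D S l A)"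
          using True by (simp add: pos_less_divide_eq less_imp_le)
        then have "c * real A \<le> real (cnt I D S l A)" unfolding c_def by (simp add: max_def)
        moreover have "real N0 * c \<ge> 0" using c0 by simp
        ultimately have "real A * c - real N0 * c \<le> real (cnt I D S l A)" by (simp add: mult.commute)
        then show ?thesis unfolding c_def .
      next
        case False
        then have "real A * c \<le> real N0 * c"
          using c0 by (cases "A = 0") (auto intro!: mult_right_mono)
        then show ?thesis unfolding c_def by simp
      qed
    qed
  qed
  then obtain Kf where Kf: "\<And>l. Kf l \<ge> 0" "\<And>l A. real (cnt I D S l A) \<ge> real A * max (R$l - 2*\<delta>) 0 - Kf l"
    by metis
  show ?thesis
  proof (intro exI[of _ "\<Sum>l\<in>UNIV. Kf l"] conjI allI)
    show "0 \<le> (\<Sum>l\<in>UNIV. Kf l)" using Kf(1) by (simp add: sum_nonneg)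
    fix l A
    have "Kf l \<le> (\<Sum>l\<in>UNIV. Kf l)" by (rule member_le_sum) (use Kf(1) in auto)
    then show "real A * max (R$l - 2*\<delta>) 0 - (\<Sum>l\<in>UNIV. Kf l) \<le> real (cnt I D S l A)"
      using Kf(2)[where l=l and A=A] by linarith
  qed
qed



lemma D_bound:
  fixes D :: "'l::finite \<Rightarrow> 'l \<Rightarrow> int"
  shows "\<forall>l l'. \<bar>D l l'\<bar> \<le> int (nat (\<Sum>l\<in>UNIV. \<Sum>l'\<in>UNIV. \<bar>D l l'\<bar>))"
proof (intro allI)
  fix l l'
  have "\<bar>D l l'\<bar> \<le> (\<Sum>l'\<in>UNIV. \<bar>D l l'\<bar>)" by (rule member_le_sum) auto
  also have "\<dots> \<le> (\<Sum>l\<in>UNIV. \<Sum>l'\<in>UNIV. \<bar>D l l'\<bar>)"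
    by (rule member_le_sum[where f = "\<lambda>l. \<Sum>l'\<in>UNIV. \<bar>D l l'\<bar>"]) (auto intro: sum_nonneg)
  moreover have "0 \<le> (\<Sum>l\<in>UNIV. \<Sum>l'\<in>UNIV. \<bar>D l l'\<bar>)" by (intro sum_nonneg) auto
  ultimately show "\<bar>D l l'\<bar> \<le> int (nat (\<Sum>l\<in>UNIV. \<Sum>l'\<in>UNIV. \<bar>D l l'\<bar>))" by simp
qed

lemma mix_achievable:
  fixes I :: "'l::finite \<Rightarrow> 'l set set" and D :: "'l \<Rightarrow> 'l \<Rightarrow> int"
  assumes R1: "achievable I D R1" and R2: "achievable I D R2"
    and u: "0 \<le> u" and v: "0 \<le> v" and uv: "u + v = 1"
  shows "achievable I D (u *\<^sub>R R1 + v *\<^sub>R R2)"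
  unfolding achievable_def
proof (intro conjI allI impI)
  fix l
  show "0 \<le> (u *\<^sub>R R1 + v *\<^sub>R R2) $ l"
    using R1 R2 u v unfolding achievable_def by simp
next
  fix \<epsilon> :: real assume \<epsilon>: "\<epsilon> > 0"
  define \<delta> where "\<delta> = \<epsilon> / 3"
  have \<delta>: "\<delta> > 0" using \<epsilon> by (simp add: \<delta>_def)
  obtain S1 where S1: "rate_exists I D S1" "\<forall>l. rate_vector I D S1 $ l \<ge> R1 $ l - \<delta>"
    using R1 \<delta> unfolding achievable_def by blast
  obtain S2 where S2: "rate_exists I D S2" "\<forall>l. rate_vector I D S2 $ l \<ge> R2 $ l - \<delta>"
    using R2 \<delta> unfolding achievable_def by blast
  obtain K1 where K1: "K1 \<ge> 0" "\<And>l A. real (cnt I D S1 l A) \<ge> real A * max (R1$l - 2*\<delta>) 0 - K1"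
    using cnt_lower[OF S1 \<delta>] by blast
  obtain K2 where K2: "K2 \<ge> 0" "\<And>l A. real (cnt I D S2 l A) \<ge> real A * max (R2$l - 2*\<delta>) 0 - K2"
    using cnt_lower[OF S2 \<delta>] by blast
  define G where "G = nat (\<Sum>l\<in>UNIV. \<Sum>l'\<in>UNIV. \<bar>D l l'\<bar>)"
  have Dg: "\<forall>l l'. \<bar>D l l'\<bar> \<le> int G" unfolding G_def by (rule D_bound)
  define c1 where "c1 l = max (R1$l - 2*\<delta>) 0" for l
  define c2 where "c2 l = max (R2$l - 2*\<delta>) 0" for l
  define T where "T l = u * c1 l + v * c2 l" for l
  have c1: "c1 l \<ge> 0" "c1 l \<ge> R1$l - 2*\<delta>" for l by (auto simp: c1_def)
  have c2: "c2 l \<ge> 0" "c2 l \<ge> R2$l - 2*\<delta>" for l by (auto simp: c2_def)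
  have T0: "T l \<ge> 0" for l using c1 c2 u v by (simp add: T_def)
  define M where "M = (\<Sum>l\<in>UNIV. c1 l + 2 * real G * T l) + K1 + K2"
  define N where "N = nat \<lceil>M / \<delta>\<rceil> + 1"
  have Ml: "c1 l + 2 * real G * T l + K1 + K2 \<le> M" for l
  proof -
    have "c1 l + 2 * real G * T l \<le> (\<Sum>l\<in>UNIV. c1 l + 2 * real G * T l)"
      by (rule member_le_sum[where f = "\<lambda>l. c1 l + 2 * real G * T l"]) (use c1 T0 in auto)
    then show ?thesis unfolding M_def by simp
  qed
  have N1: "N \<ge> 1" by (simp add: N_def)
  have NM: "\<delta> * real N \<ge> M"
  proof -
    have "M / \<delta> \<le> real N" unfolding N_def by linarith
    then show ?thesis using \<delta> by (simp add: pos_divide_le_eq mult.commute)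
  qed
  define A where "A = nat \<lfloor>u * real N\<rfloor>"
  have u1: "u \<le> 1" using uv v by simp
  have A1: "real A \<le> u * real N" unfolding A_def using u by simp
  have A2: "real A \<ge> u * real N - 1" unfolding A_def using u by linarith
  have AN: "A \<le> N"
  proof -
    have "u * real N \<le> real N" by (rule mult_left_le_one_le) (use u u1 in auto)
    then show ?thesis using A1 by linarith
  qed
  define B where "B = N - A"
  have uvN: "u * real N + v * real N = real N" using uv by (metis distrib_right mult_1)
  have B1: "real B \<ge> v * real N" unfolding B_def using AN A1 uvN
    by (simp add: of_nat_diff)
  define P where "P = A + B + 2 * G"
  have PN: "P = N + 2 * G" unfolding P_def B_def using AN by simp
  have P0: "0 < P" using PN N1 by simp
  define Sc where "Sc = tshare S1 S2 (int A) (int B) (int G)"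
  have lim: "avg_success I D Sc l \<longlonglongrightarrow> real (cnt I D Sc l P) / real P" for l
    unfolding Sc_def by (rule tshare_rate[OF P0 P_def])
  have "rate_exists I D Sc" unfolding rate_exists_def convergent_def using lim by blast
  moreover have "\<forall>l. rate_vector I D Sc $ l \<ge> (u *\<^sub>R R1 + v *\<^sub>R R2) $ l - \<epsilon>"
  proof
    fix l
    have rv: "rate_vector I D Sc $ l = real (cnt I D Sc l P) / real P"
      unfolding rate_vector_def using limI[OF lim] by simp
    have "real (cnt I D S1 l A) + real (cnt I D S2 l B) \<le> real (cnt I D Sc l P)"
      using count_period[OF _ Dg, of A B I S1 l S2] P0 unfolding Sc_def P_def
      by (simp only: of_nat_add[symmetric] of_nat_le_iff)
    moreover have "real (cnt I D S1 l A) \<ge> real A * c1 l - K1" using K1(2) by (simp add: c1_def)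
    moreover have "real (cnt I D S2 l B) \<ge> real B * c2 l - K2" using K2(2) by (simp add: c2_def)
    moreover have "real A * c1 l \<ge> (u * real N - 1) * c1 l" using A2 c1(1) by (simp add: mult_right_mono)
    moreover have "real B * c2 l \<ge> (v * real N) * c2 l" using B1 c2(1) by (simp add: mult_right_mono)
    ultimately have low: "real (cnt I D Sc l P) \<ge> real N * T l - c1 l - K1 - K2"
      unfolding T_def by (simp add: algebra_simps)
    have key: "real N * T l - c1 l - K1 - K2 \<ge> real P * (T l - \<delta>)"
    proof -
      have "real P * (T l - \<delta>) = real N * T l + 2 * real G * T l - \<delta> * real N - 2 * real G * \<delta>"
        unfolding PN by (simp add: algebra_simps)
      also have "\<dots> \<le> real N * T l + 2 * real G * T l - M" 
      proof -
        have "0 \<le> 2 * real G * \<delta>" using \<delta> by simp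
        then show ?thesis using NM by linarith
      qed
      also have "\<dots> \<le> real N * T l - c1 l - K1 - K2" using Ml[of l] by simp
      finally show ?thesis .
    qed
    have "T l - \<delta> \<le> real (cnt I D Sc l P) / real P"
      using low key P0 by (simp add: pos_le_divide_eq mult.commute)
    moreover have "(u *\<^sub>R R1 + v *\<^sub>R R2) $ l - \<epsilon> \<le> T l - \<delta>"
    proof -
      have "u * c1 l \<ge> u * (R1$l - 2*\<delta>)" using c1(2) u by (simp add: mult_left_mono)
      moreover have "v * c2 l \<ge> v * (R2$l - 2*\<delta>)" using c2(2) v by (simp add: mult_left_mono)
      moreover have "u * (R1$l - 2*\<delta>) + v * (R2$l - 2*\<delta>) = u * R1$l + v * R2$l - 2*\<delta>"
        using uv by (metis (no_types, opaque_lifting) add_diff_add distrib_right mult_1 right_diff_distrib)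
      moreover have "\<epsilon> = 3 * \<delta>" unfolding \<delta>_def by simp
      ultimately show ?thesis unfolding T_def by simp
    qed
    ultimately show "rate_vector I D Sc $ l \<ge> (u *\<^sub>R R1 + v *\<^sub>R R2) $ l - \<epsilon>" using rv by simp
  qed
  ultimately show "\<exists>S. rate_exists I D S \<and> (\<forall>l. (u *\<^sub>R R1 + v *\<^sub>R R2) $ l - \<epsilon> \<le> rate_vector I D S $ l)"
    by blast
qed

theorem lemma1:
  fixes I :: "'l::finite \<Rightarrow> 'l set set" and D :: "'l \<Rightarrow> 'l \<Rightarrow> int"
  assumes "network I"
  shows "convex (rate_region I D)"
  by (rule convexI) (auto simp: rate_region_def intro: mix_achievable)

end
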